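(* Let $a<b<c$ be integers, so that the infinite arc $(-\infty,b)$ crosses the finite arc $(a,c)$. Then there are non-split short exact sequences in $\mathcal{C}_2$ \[ 0\to(-\infty,b)\xrightarrow{f}(a,b)\oplus(-\infty,c)\xrightarrow{g}(a,c)\to0,\qquad 0\to(a,c)\xrightarrow{f'}(b,c)\oplus(-\infty,a)\xrightarrow{g'}(-\infty,b)\to0. \]
   Context: Let $R=\mathbb{C}[x,y]/(x^2)$, graded with $\deg x=1$, $\deg y=-1$; $M(j)_n=M_{j+n}$. $\mathcal{C}_2$ is the exact category of finitely generated $\mathbb{Z}$-graded maximal Cohen–Macaulay $R$-modules with degree-preserving morphisms. An arc is a pair $(a,b)$ with $a\in\mathbb{Z}\cup\{-\infty\}$, $b\in\mathbb{Z}$, $a<b$; a finite arc $(a,b)$ ($a\in\mathbb{Z}$) denotes the module $(x,y^{b-a-1})(1-b)$ (where $(x,y^0)=R$), and an infinite arc $(-\infty,b)$ denotes $\mathbb{C}[y](-b)=(R/(x))(-b)$. *)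

theory Defs
  imports "HOL-Computational_Algebra.Polynomial"
begin

text \<open>Graded modules over R = C[x,y]/(x^2), deg x = 1, deg y = -1, given concretely:
  a carrier set inside an ambient type, C-vector space operations, the actions
  of x and y, and the homogeneous components (degree n part).\<close>

record 'a gmod =
  gcar :: "'a set"
  gzero :: 'a
  gadd :: "'a \<Rightarrow> 'a \<Rightarrow> 'a"
  gscale :: "complex \<Rightarrow> 'a \<Rightarrow> 'a"
  gx :: "'a \<Rightarrow> 'a"
  gy :: "'a \<Rightarrow> 'a"
  ghom :: "int \<Rightarrow> 'a set"

definition gmor :: "'a gmod \<Rightarrow> 'b gmod \<Rightarrow> ('a \<Rightarrow> 'b) \<Rightarrow> bool" where
  "gmor M N f \<longleftrightarrow>
     (\<forall>v\<in>gcar M. f v \<in> gcar N) \<and>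
     (\<forall>u\<in>gcar M. \<forall>v\<in>gcar M. f (gadd M u v) = gadd N (f u) (f v)) \<and>
     (\<forall>c. \<forall>v\<in>gcar M. f (gscale M c v) = gscale N c (f v)) \<and>
     (\<forall>v\<in>gcar M. f (gx M v) = gx N (f v)) \<and>
     (\<forall>v\<in>gcar M. f (gy M v) = gy N (f v)) \<and>
     (\<forall>n. \<forall>v\<in>ghom M n. f v \<in> ghom N n)"

definition short_exact :: "'a gmod \<Rightarrow> 'b gmod \<Rightarrow> 'c gmod \<Rightarrow> ('a \<Rightarrow> 'b) \<Rightarrow> ('b \<Rightarrow> 'c) \<Rightarrow> bool" where
  "short_exact A B C f g \<longleftrightarrow>
     gmor A B f \<and> gmor B C g \<and> inj_on f (gcar A) \<and> g ` gcar B = gcar C \<and>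
     (\<forall>v\<in>gcar B. g v = gzero C \<longleftrightarrow> v \<in> f ` gcar A)"

text \<open>A short exact sequence splits iff f has a retraction in the category.\<close>
definition ses_split :: "'a gmod \<Rightarrow> 'b gmod \<Rightarrow> ('a \<Rightarrow> 'b) \<Rightarrow> bool" where
  "ses_split A B f \<longleftrightarrow> (\<exists>r. gmor B A r \<and> (\<forall>v\<in>gcar A. r (f v) = v))"

definition gsum :: "'a gmod \<Rightarrow> 'b gmod \<Rightarrow> ('a \<times> 'b) gmod" where
  "gsum M N = \<lparr> gcar = gcar M \<times> gcar N, gzero = (gzero M, gzero N),
     gadd = (\<lambda>(u1,u2) (v1,v2). (gadd M u1 v1, gadd N u2 v2)),
     gscale = (\<lambda>c (v1,v2). (gscale M c v1, gscale N c v2)),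
     gx = (\<lambda>(v1,v2). (gx M v1, gx N v2)),
     gy = (\<lambda>(v1,v2). (gy M v1, gy N v2)),
     ghom = (\<lambda>n. ghom M n \<times> ghom N n) \<rparr>"

definition gshift :: "'a gmod \<Rightarrow> int \<Rightarrow> 'a gmod" where
  "gshift M j = M\<lparr> ghom := (\<lambda>n. ghom M (j + n)) \<rparr>"

text \<open>Element (p,q) of R represents p(y) + x q(y).\<close>
type_synonym relt = "complex poly \<times> complex poly"

definition R_hom :: "int \<Rightarrow> relt set" where
  "R_hom d = {(p,q). \<exists>c c'. p = monom c (nat (-d)) \<and> q = monom c' (nat (1-d)) \<and>
                         (d > 0 \<longrightarrow> c = 0) \<and> (d > 1 \<longrightarrow> c' = 0)}"

text \<open>The ideal (x, y^m) of R (for m = 0 this is R itself).\<close>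
definition ideal_xy :: "nat \<Rightarrow> relt gmod" where
  "ideal_xy m = \<lparr> gcar = {(p,q). [:0,1:] ^ m dvd p}, gzero = (0,0),
     gadd = (\<lambda>(p,q) (p',q'). (p+p', q+q')),
     gscale = (\<lambda>c (p,q). (smult c p, smult c q)),
     gx = (\<lambda>(p,q). (0, p)),
     gy = (\<lambda>(p,q). ([:0,1:] * p, [:0,1:] * q)),
     ghom = (\<lambda>d. R_hom d \<inter> {(p,q). [:0,1:] ^ m dvd p}) \<rparr>"

text \<open>C[y] = R/(x), elements (p,0), x acting by zero.\<close>
definition cy_mod :: "relt gmod" where
  "cy_mod = \<lparr> gcar = {(p,q). q = 0}, gzero = (0,0),
     gadd = (\<lambda>(p,q) (p',q'). (p+p', q+q')),
     gscale = (\<lambda>c (p,q). (smult c p, smult c q)),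
     gx = (\<lambda>(p,q). (0, 0)),
     gy = (\<lambda>(p,q). ([:0,1:] * p, [:0,1:] * q)),
     ghom = (\<lambda>d. {(p,q). \<exists>c. p = monom c (nat (-d)) \<and> q = 0 \<and> (d > 0 \<longrightarrow> c = 0)}) \<rparr>"

text \<open>Finite arc (a,b): (x, y^{b-a-1})(1-b). Infinite arc (-\<infinity>,b): C[y](-b).\<close>
definition farc :: "int \<Rightarrow> int \<Rightarrow> relt gmod" where
  "farc a b = gshift (ideal_xy (nat (b - a - 1))) (1 - b)"

definition iarc :: "int \<Rightarrow> relt gmod" where
  "iarc b = gshift cy_mod (- b)"

end

theory Submission
  imports Defs
begin
abbreviation Y :: "complex poly" where "Y \<equiv> [:0,1:]"

lemma farc_simps:
  "gcar (farc a b) = {(p,q). Y ^ nat (b-a-1) dvd p}"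
  "gzero (farc a b) = (0,0)"
  "gadd (farc a b) = (\<lambda>(p,q) (p',q'). (p+p', q+q'))"
  "gscale (farc a b) = (\<lambda>c (p,q). (smult c p, smult c q))"
  "gx (farc a b) = (\<lambda>(p,q). (0, p))"
  "gy (farc a b) = (\<lambda>(p,q). (Y * p, Y * q))"
  "ghom (farc a b) n = R_hom (1 - b + n) \<inter> {(p,q). Y ^ nat (b-a-1) dvd p}"
  by (simp_all add: farc_def gshift_def ideal_xy_def)

lemma iarc_simps:
  "gcar (iarc b) = {(p,q). q = 0}"
  "gzero (iarc b) = (0,0)"
  "gadd (iarc b) = (\<lambda>(p,q) (p',q'). (p+p', q+q'))"
  "gscale (iarc b) = (\<lambda>c (p,q). (smult c p, smult c q))"
  "gx (iarc b) = (\<lambda>(p,q). (0, 0))"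
  "gy (iarc b) = (\<lambda>(p,q). (Y * p, Y * q))"
  "ghom (iarc b) n = {(p,q). \<exists>c. p = monom c (nat (b - n)) \<and> q = 0 \<and> (n > b \<longrightarrow> c = 0)}"
  by (simp_all add: iarc_def gshift_def cy_mod_def)

lemma gsum_simps:
  "gcar (gsum M N) = gcar M \<times> gcar N"
  "gzero (gsum M N) = (gzero M, gzero N)"
  "gadd (gsum M N) (u1,u2) (v1,v2) = (gadd M u1 v1, gadd N u2 v2)"
  "gscale (gsum M N) c (v1,v2) = (gscale M c v1, gscale N c v2)"
  "gx (gsum M N) (v1,v2) = (gx M v1, gx N v2)"
  "gy (gsum M N) (v1,v2) = (gy M v1, gy N v2)"
  "ghom (gsum M N) n = ghom M n \<times> ghom N n"
  by (simp_all add: gsum_def)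

lemma R_hom_iff: "(p,q) \<in> R_hom d \<longleftrightarrow> (\<exists>c c'. p = monom c (nat (-d)) \<and> q = monom c' (nat (1-d)) \<and>
                         (d > 0 \<longrightarrow> c = 0) \<and> (d > 1 \<longrightarrow> c' = 0))"
  by (simp add: R_hom_def)

lemma Y_monom: "Y ^ k * monom c n = monom c (n + k)"
  by (simp add: monom_altdef power_add mult_ac)

lemma Y_dvd_monom: "c \<noteq> 0 \<Longrightarrow> Y ^ m dvd monom c n \<Longrightarrow> m \<le> n"
proof -
  assume c: "c \<noteq> 0" and d: "Y ^ m dvd monom c n"
  have "degree (Y^m) \<le> degree (monom c n)" using dvd_imp_degree_le[OF d] c by simp
  thus ?thesis using c by (simp add: degree_power_eq degree_monom_eq)
qed

lemma div_Y: "(Y ^ k * u) div Y ^ k = u"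
  by simp

lemma gy_pow: "((\<lambda>(p,q). (Y * p, Y * q)) ^^ k) (p,q) = (Y^k * p, Y^k * q)"
  by (induction k) (auto simp: mult_ac)

lemma gmor_pow:
  assumes "gmor M N r" "\<And>v. v \<in> gcar M \<Longrightarrow> gy M v \<in> gcar M" "v \<in> gcar M"
  shows "(gy M ^^ k) v \<in> gcar M \<and> r ((gy M ^^ k) v) = (gy N ^^ k) (r v)"
  using assms by (induction k) (auto simp: gmor_def)

lemma shiftm: "b \<le> c \<Longrightarrow> n \<le> b \<Longrightarrow> Y ^ nat (c-b) * monom k (nat (b-n)) = monom k (nat (c-n))"
  by (simp add: Y_monom nat_add_distrib[symmetric])

lemma gmor_f1:
  assumes "a < b" "b < c"
  shows "gmor (iarc b) (gsum (farc a b) (iarc c)) (\<lambda>(p,q). ((0,p), (Y^nat(c-b) * p, 0)))"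
  unfolding gmor_def
proof (intro conjI)
  show "\<forall>n. \<forall>v\<in>ghom (iarc b) n. (\<lambda>(p,q). ((0,p), (Y^nat(c-b) * p, (0::complex poly)))) v \<in> ghom (gsum (farc a b) (iarc c)) n"
  proof (intro allI ballI)
    fix n v assume v: "v \<in> ghom (iarc b) n"
    then obtain k where k: "v = (monom k (nat (b-n)), 0)" "n > b \<longrightarrow> k = 0"
      by (auto simp: iarc_simps)
    show "(\<lambda>(p,q). ((0,p), (Y^nat(c-b) * p, (0::complex poly)))) v \<in> ghom (gsum (farc a b) (iarc c)) n"
    proof (cases "n \<le> b")
      case True
      then show ?thesis using k assms
        by (auto simp: gsum_simps farc_simps iarc_simps R_hom_iff shiftm intro!: exI[of _ 0] exI[of _ k])
    next
      case False
      then show ?thesis using k assms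
        by (auto simp: gsum_simps farc_simps iarc_simps R_hom_iff intro!: exI[of _ 0])
    qed
  qed
qed (auto simp: gsum_simps farc_simps iarc_simps algebra_simps)

lemma gmor_g1:
  assumes "a < b" "b < c"
  shows "gmor (gsum (farc a b) (iarc c)) (farc a c) (\<lambda>((p,q),(r,s)). (Y^nat(c-b) * p, Y^nat(c-b) * q - r))"
  unfolding gmor_def
proof (intro conjI)
  have e: "nat (c-a-1) = nat(c-b) + nat (b-a-1)" using assms by simp
  show "\<forall>v\<in>gcar (gsum (farc a b) (iarc c)). (\<lambda>((p,q),(r,s)). (Y^nat(c-b) * p, Y^nat(c-b) * q - r)) v \<in> gcar (farc a c)"
    by (auto simp: gsum_simps farc_simps iarc_simps e power_add intro: mult_dvd_mono)
  show "\<forall>n. \<forall>v\<in>ghom (gsum (farc a b) (iarc c)) n. (\<lambda>((p,q),(r,s)). (Y^nat(c-b) * p, Y^nat(c-b) * q - r)) v \<in> ghom (farc a c) n"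
  proof (intro allI ballI)
    fix n v assume v: "v \<in> ghom (gsum (farc a b) (iarc c)) n"
    then obtain p q r where pq: "v = ((p,q),(r,0))" "(p,q) \<in> R_hom (1-b+n)" "Y ^ nat (b-a-1) dvd p"
       and r: "\<exists>k. r = monom k (nat (c-n)) \<and> (n > c \<longrightarrow> k = 0)"
      by (auto simp: gsum_simps farc_simps iarc_simps)
    from pq(2) obtain c0 c1 where c: "p = monom c0 (nat (b-1-n))" "q = monom c1 (nat (b-n))"
      "n > b - 1 \<longrightarrow> c0 = 0" "n > b \<longrightarrow> c1 = 0"
      by (auto simp: R_hom_iff)
    from r obtain k where k: "r = monom k (nat (c-n))" "n > c \<longrightarrow> k = 0" by auto
    have dv: "Y ^ nat (c-a-1) dvd Y^nat(c-b) * p"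
      using pq(3) by (simp add: e power_add mult_dvd_mono)
    have h1: "Y^nat(c-b) * p = monom c0 (nat (c-1-n))"
    proof (cases "n \<le> b - 1")
      case True thus ?thesis using c assms shiftm[of b c "n+1" c0] by (simp add: algebra_simps)
    next
      case False thus ?thesis using c by simp
    qed
    have h2: "Y^nat(c-b) * q - r = monom (c1 - k) (nat (c-n))"
    proof (cases "n \<le> b")
      case True thus ?thesis using c k assms shiftm[of b c n c1] by (simp add: diff_monom minus_monom)
    next
      case False thus ?thesis using c k assms by (cases "n \<le> c") (auto simp: diff_monom minus_monom)
    qed
    show "(\<lambda>((p,q),(r,s)). (Y^nat(c-b) * p, Y^nat(c-b) * q - r)) v \<in> ghom (farc a c) n"
      using pq(1) h1 h2 dv c k assms by (auto simp: farc_simps R_hom_iff)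
  qed
qed (auto simp: gsum_simps farc_simps iarc_simps algebra_simps smult_diff_right)

lemma gy_pow2: "((\<lambda>((p,q),(r,s)). ((Y * p, Y * q),(Y*r,Y*s))) ^^ k) ((p,q),(r,s)) = ((Y^k * p, Y^k * q),(Y^k*r,Y^k*s))"
  by (induction k) (auto simp: mult_ac)

lemma gy_sum1: "gy (gsum (farc a b) (iarc c)) = (\<lambda>((p,q),(r,s)). ((Y * p, Y * q),(Y*r,Y*s)))"
  by (auto simp: gsum_def farc_simps iarc_simps intro!: ext)

lemma gy_sum2: "v \<in> gcar (gsum (farc a b) (iarc c)) \<Longrightarrow> gy (gsum (farc a b) (iarc c)) v \<in> gcar (gsum (farc a b) (iarc c))"
proof -
  assume "v \<in> gcar (gsum (farc a b) (iarc c))"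
  then obtain p q r where v: "v = ((p,q),(r,0))" "Y ^ nat (b-a-1) dvd p" by (auto simp: gsum_simps farc_simps iarc_simps)
  have "Y ^ nat (b-a-1) dvd Y * p" using v(2) by (rule dvd_mult)
  then show ?thesis using v by (simp add: gy_sum1 gsum_simps farc_simps iarc_simps)
qed

lemma Y_pow_neq_1: "k > 0 \<Longrightarrow> Y ^ k * p \<noteq> 1"
proof
  assume "k > 0" "Y ^ k * p = 1"
  then have "p \<noteq> 0" by auto
  then have "degree (Y^k * p) = k + degree p" by (simp add: degree_mult_eq degree_power_eq)
  with \<open>k > 0\<close> \<open>Y ^ k * p = 1\<close> show False by simp
qed

lemma seq1:
  assumes "a < b" "b < c"
  shows "short_exact (iarc b) (gsum (farc a b) (iarc c)) (farc a c) (\<lambda>(p,q). ((0,p), (Y^nat(c-b) * p, 0)))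
                (\<lambda>((p,q),(r,s)). (Y^nat(c-b) * p, Y^nat(c-b) * q - r))
     \<and> \<not> ses_split (iarc b) (gsum (farc a b) (iarc c)) (\<lambda>(p,q). ((0,p), (Y^nat(c-b) * p, 0)))"
proof
  let ?A = "iarc b" and ?B = "gsum (farc a b) (iarc c)" and ?C = "farc a c"
  let ?f = "\<lambda>(p,q). ((0::complex poly,p), (Y^nat(c-b) * p, 0::complex poly))"
  let ?g = "\<lambda>((p,q),(r::complex poly,s::complex poly)). (Y^nat(c-b) * p, Y^nat(c-b) * q - r)"
  have e: "nat (c-a-1) = nat(c-b) + nat (b-a-1)" using assms by simp
  have surj: "?g ` gcar ?B = gcar ?C"
  proof
    show "?g ` gcar ?B \<subseteq> gcar ?C" using gmor_g1[OF assms] by (auto simp: gmor_def)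
    show "gcar ?C \<subseteq> ?g ` gcar ?B"
    proof
      fix w assume "w \<in> gcar ?C"
      then obtain P Q u where w: "w = (P,Q)" "P = Y ^ nat (c-a-1) * u" by (auto simp: farc_simps)
      have "((Y ^ nat (b-a-1) * u, 0), (-Q, 0)) \<in> gcar ?B" by (auto simp: gsum_simps farc_simps iarc_simps)
      moreover have "?g ((Y ^ nat (b-a-1) * u, 0), (-Q, 0)) = w" using w e by (simp add: power_add mult_ac)
      ultimately show "w \<in> ?g ` gcar ?B" by force
    qed
  qed
  have ker: "\<forall>v\<in>gcar ?B. ?g v = gzero ?C \<longleftrightarrow> v \<in> ?f ` gcar ?A"
  proof
    fix v assume "v \<in> gcar ?B"
    then obtain p q r where v: "v = ((p,q),(r,0))" "Y ^ nat (b-a-1) dvd p" by (auto simp: gsum_simps farc_simps iarc_simps)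
    show "?g v = gzero ?C \<longleftrightarrow> v \<in> ?f ` gcar ?A"
    proof
      assume "?g v = gzero ?C"
      then have "p = 0" "r = Y^nat(c-b) * q" using v by (auto simp: farc_simps)
      then have "v = ?f (q,0)" using v by simp
      moreover have "(q,0) \<in> gcar ?A" by (simp add: iarc_simps)
      ultimately show "v \<in> ?f ` gcar ?A" by blast
    next
      assume "v \<in> ?f ` gcar ?A"
      then show "?g v = gzero ?C" by (auto simp: iarc_simps farc_simps)
    qed
  qed
  have inj: "inj_on ?f (gcar ?A)" by (auto simp: inj_on_def iarc_simps)
  show "short_exact ?A ?B ?C ?f ?g"
    unfolding short_exact_def using gmor_f1[OF assms] gmor_g1[OF assms] surj ker inj by blast
  show "\<not> ses_split ?A ?B ?f"
  proof
    assume "ses_split ?A ?B ?f"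
    then obtain r where r: "gmor ?B ?A r" "\<forall>v\<in>gcar ?A. r (?f v) = v" by (auto simp: ses_split_def)
    define m where "m = nat (b-a-1)"
    define k where "k = nat (c-b)"
    have k0: "k > 0" using assms by (simp add: k_def)
    let ?u1 = "((0::complex poly,1::complex poly),(0::complex poly,0::complex poly))"
    let ?u2 = "((0::complex poly,0::complex poly),(Y^k,0::complex poly))"
    let ?u0 = "((0::complex poly,0::complex poly),(1::complex poly,0::complex poly))"
    let ?w = "((Y^m,0::complex poly),(0::complex poly,0::complex poly))"
    have inB: "?u1 \<in> gcar ?B" "?u2 \<in> gcar ?B" "?u0 \<in> gcar ?B" "?w \<in> gcar ?B"
      by (auto simp: gsum_simps farc_simps iarc_simps m_def)
    obtain p1 where p1: "r ?u1 = (p1, 0)" using r(1) inB(1) unfolding gmor_def by (auto simp: iarc_simps)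
    obtain p0 where p0: "r ?u0 = (p0, 0)" using r(1) inB(3) unfolding gmor_def by (auto simp: iarc_simps)
    have "r (gx ?B ?w) = gx ?A (r ?w)" using r(1) inB(4) unfolding gmor_def by blast
    also have "gx ?A (r ?w) = (0,0)" by (simp add: iarc_simps split: prod.splits)
    finally have x1: "r ((0,Y^m),(0,0)) = (0,0)" by (simp add: gsum_simps farc_simps iarc_simps)
    have "r ((gy ?B ^^ m) ?u1) = (gy ?A ^^ m) (r ?u1)"
      using gmor_pow[OF r(1) gy_sum2 inB(1)] by blast
    hence "r ((Y^m*0, Y^m*1),(Y^m*0,Y^m*0)) = (Y^m*p1, Y^m*0)" unfolding gy_sum1 iarc_simps(6) gy_pow2 p1 gy_pow .
    hence "(Y^m * p1, 0) = (0,0)" using x1 by simp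
    hence p10: "p1 = 0" by simp
    have "r ((gy ?B ^^ k) ?u0) = (gy ?A ^^ k) (r ?u0)"
      using gmor_pow[OF r(1) gy_sum2 inB(3)] by blast
    hence "r ((Y^k*0, Y^k*0),(Y^k*1,Y^k*0)) = (Y^k*p0, Y^k*0)" unfolding gy_sum1 iarc_simps(6) gy_pow2 p0 gy_pow .
    hence x2: "r ?u2 = (Y^k * p0, 0)" by simp
    have "r (gadd ?B ?u1 ?u2) = gadd ?A (r ?u1) (r ?u2)" using r(1) inB unfolding gmor_def by blast
    also have "gadd ?B ?u1 ?u2 = ?f (1,0)" by (simp add: gsum_simps farc_simps iarc_simps k_def)
    also have "r (?f (1,0)) = (1,0)" using r(2) iarc_simps(1)[of b] by (metis (mono_tags, lifting) case_prod_conv mem_Collect_eq)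
    finally have "(1::complex poly, 0::complex poly) = (Y^k * p0, 0)" using p10 p1 x2 by (simp add: iarc_simps)
    thus False using Y_pow_neq_1[OF k0, of p0] by simp
  qed
qed

lemma divm: "N \<le> j \<Longrightarrow> monom c0 j div Y^N = monom c0 (j-N)"
proof -
  assume "N \<le> j"
  then have "monom c0 j = Y^N * monom c0 (j-N)" by (simp add: Y_monom)
  then show ?thesis by simp
qed

lemma gmor_f2:
  assumes "a < b" "b < c"
  shows "gmor (farc a c) (gsum (farc b c) (iarc a)) (\<lambda>(p,q). ((p,q), (p div Y^nat(c-a-1), 0)))"
  unfolding gmor_def
proof (intro conjI)
  define M where "M = nat (c-a-1)"
  define N where "N = nat (c-b-1)"
  define D where "D = nat (b-a)"
  have MND: "M = D + N" using assms by (simp add: M_def N_def D_def)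
  let ?f = "\<lambda>(p,q). ((p,q), (p div Y^nat(c-a-1), 0::complex poly))"
  show "\<forall>v\<in>gcar (farc a c). ?f v \<in> gcar (gsum (farc b c) (iarc a))"
    by (auto simp: gsum_simps farc_simps iarc_simps MND[unfolded M_def N_def D_def] power_add intro: dvd_mult_right)
  show "\<forall>u\<in>gcar (farc a c). \<forall>v\<in>gcar (farc a c). ?f (gadd (farc a c) u v) = gadd (gsum (farc b c) (iarc a)) (?f u) (?f v)"
    by (auto simp: gsum_simps farc_simps iarc_simps poly_div_add_left)
  show "\<forall>k. \<forall>v\<in>gcar (farc a c). ?f (gscale (farc a c) k v) = gscale (gsum (farc b c) (iarc a)) k (?f v)"
    by (auto simp: gsum_simps farc_simps iarc_simps div_smult_left)
  show "\<forall>v\<in>gcar (farc a c). ?f (gx (farc a c) v) = gx (gsum (farc b c) (iarc a)) (?f v)"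
    by (auto simp: gsum_simps farc_simps iarc_simps)
  show "\<forall>v\<in>gcar (farc a c). ?f (gy (farc a c) v) = gy (gsum (farc b c) (iarc a)) (?f v)"
  proof
    fix v assume "v \<in> gcar (farc a c)"
    then obtain p q u where v: "v = (p,q)" "p = Y ^ M * u" by (auto simp: farc_simps M_def)
    have "(Y * p) div Y^M = Y * (p div Y^M)" using v(2)
      by (metis div_Y mult.left_commute)
    then show "?f (gy (farc a c) v) = gy (gsum (farc b c) (iarc a)) (?f v)"
      using v by (simp add: gsum_simps farc_simps iarc_simps M_def)
  qed
  show "\<forall>n. \<forall>v\<in>ghom (farc a c) n. ?f v \<in> ghom (gsum (farc b c) (iarc a)) n"
  proof (intro allI ballI)
    fix n v assume v: "v \<in> ghom (farc a c) n"
    then obtain p q where pq: "v = (p,q)" "(p,q) \<in> R_hom (1-c+n)" "Y ^ M dvd p"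
      by (auto simp: farc_simps M_def)
    from pq(2) obtain c0 c1 where c: "p = monom c0 (nat (c-1-n))" 
      "n > c - 1 \<longrightarrow> c0 = 0" "q = monom c1 (nat (c-n))" "n > c \<longrightarrow> c1 = 0"
      by (auto simp: R_hom_iff)
    have dN: "Y ^ N dvd p" using pq(3) MND by (simp add: power_add dvd_mult_right)
    have h: "p div Y^M = monom c0 (nat (a-n)) \<and> (n > a \<longrightarrow> c0 = 0)"
    proof (cases "c0 = 0")
      case True thus ?thesis using c by simp
    next
      case False
      then have "M \<le> nat (c-1-n)" using Y_dvd_monom[OF False] pq(3) c(1) by blast
      moreover have "n \<le> c - 1" using c False by auto
      ultimately have "n \<le> a" "nat (c-1-n) - M = nat (a-n)" using assms unfolding M_def by simp_all
      then show ?thesis using c(1) divm[of M "nat (c-1-n)" c0] \<open>M \<le> nat (c-1-n)\<close> by simp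
    qed
    show "?f v \<in> ghom (gsum (farc b c) (iarc a)) n"
      using pq h dN by (auto simp: gsum_simps farc_simps iarc_simps N_def M_def)
  qed
qed

lemma gmor_g2:
  assumes "a < b" "b < c"
  shows "gmor (gsum (farc b c) (iarc a)) (iarc b) (\<lambda>((p,q),(r,s)). (p div Y^nat(c-b-1) - Y^nat(b-a) * r, 0))"
  unfolding gmor_def
proof (intro conjI)
  define N where "N = nat (c-b-1)"
  define D where "D = nat (b-a)"
  let ?g = "\<lambda>((p,q),(r,s)). (p div Y^nat(c-b-1) - Y^nat(b-a) * r, 0::complex poly)"
  show "\<forall>v\<in>gcar (gsum (farc b c) (iarc a)). ?g v \<in> gcar (iarc b)"
    by (auto simp: gsum_simps farc_simps iarc_simps)
  show "\<forall>u\<in>gcar (gsum (farc b c) (iarc a)). \<forall>v\<in>gcar (gsum (farc b c) (iarc a)). ?g (gadd (gsum (farc b c) (iarc a)) u v) = gadd (iarc b) (?g u) (?g v)"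
    by (auto simp: gsum_simps farc_simps iarc_simps poly_div_add_left algebra_simps)
  show "\<forall>k. \<forall>v\<in>gcar (gsum (farc b c) (iarc a)). ?g (gscale (gsum (farc b c) (iarc a)) k v) = gscale (iarc b) k (?g v)"
    by (auto simp: gsum_simps farc_simps iarc_simps div_smult_left smult_diff_right)
  show "\<forall>v\<in>gcar (gsum (farc b c) (iarc a)). ?g (gx (gsum (farc b c) (iarc a)) v) = gx (iarc b) (?g v)"
    by (auto simp: gsum_simps farc_simps iarc_simps)
  show "\<forall>v\<in>gcar (gsum (farc b c) (iarc a)). ?g (gy (gsum (farc b c) (iarc a)) v) = gy (iarc b) (?g v)"
  proof
    fix v assume "v \<in> gcar (gsum (farc b c) (iarc a))"
    then obtain p q r u where v: "v = ((p,q),(r,0))" "p = Y ^ N * u" by (auto simp: gsum_simps farc_simps iarc_simps N_def)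
    have "(Y * p) div Y^N = Y * (p div Y^N)" using v(2)
      by (metis div_Y mult.left_commute)
    then show "?g (gy (gsum (farc b c) (iarc a)) v) = gy (iarc b) (?g v)"
      using v by (simp add: gsum_simps farc_simps iarc_simps N_def algebra_simps)
  qed
  show "\<forall>n. \<forall>v\<in>ghom (gsum (farc b c) (iarc a)) n. ?g v \<in> ghom (iarc b) n"
  proof (intro allI ballI)
    fix n v assume v: "v \<in> ghom (gsum (farc b c) (iarc a)) n"
    then obtain p q r where pq: "v = ((p,q),(r,0))" "(p,q) \<in> R_hom (1-c+n)" "Y ^ N dvd p"
       and r: "\<exists>k. r = monom k (nat (a-n)) \<and> (n > a \<longrightarrow> k = 0)"
      by (auto simp: gsum_simps farc_simps iarc_simps N_def)
    from pq(2) obtain c0 c1 where c: "p = monom c0 (nat (c-1-n))" 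
      "n > c - 1 \<longrightarrow> c0 = 0"
      by (auto simp: R_hom_iff)
    from r obtain k where k: "r = monom k (nat (a-n))" "n > a \<longrightarrow> k = 0" by auto
    have h1: "p div Y^N = monom c0 (nat (b-n)) \<and> (n > b \<longrightarrow> c0 = 0)"
    proof (cases "c0 = 0")
      case True thus ?thesis using c by simp
    next
      case False
      then have "N \<le> nat (c-1-n)" using Y_dvd_monom[OF False] pq(3) c(1) by blast
      moreover have "n \<le> c - 1" using c False by auto
      ultimately have "n \<le> b" "nat (c-1-n) - N = nat (b-n)" using assms unfolding N_def by simp_all
      then show ?thesis using c(1) divm[of N "nat (c-1-n)" c0] \<open>N \<le> nat (c-1-n)\<close> by simp
    qed
    have h2: "Y^nat(b-a) * r = monom k (nat (b-n))"
    proof (cases "n \<le> a")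
      case True thus ?thesis using k assms shiftm[of a b n k] by simp
    next
      case False thus ?thesis using k by simp
    qed
    show "?g v \<in> ghom (iarc b) n"
      using pq(1) h1 h2 k assms by (auto simp: iarc_simps N_def diff_monom intro!: exI[of _ "c0 - k"])
  qed
qed

lemma seq2:
  assumes "a < b" "b < c"
  shows "short_exact (farc a c) (gsum (farc b c) (iarc a)) (iarc b) (\<lambda>(p,q). ((p,q), (p div Y^nat(c-a-1), 0)))
                (\<lambda>((p,q),(r,s)). (p div Y^nat(c-b-1) - Y^nat(b-a) * r, 0))
     \<and> \<not> ses_split (farc a c) (gsum (farc b c) (iarc a)) (\<lambda>(p,q). ((p,q), (p div Y^nat(c-a-1), 0)))"
proof
  let ?A = "farc a c" and ?B = "gsum (farc b c) (iarc a)" and ?C = "iarc b"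
  let ?f = "\<lambda>(p,q). ((p,q), (p div Y^nat(c-a-1), 0::complex poly))"
  let ?g = "\<lambda>((p,q),(r,s)). (p div Y^nat(c-b-1) - Y^nat(b-a) * r, 0::complex poly)"
  define M where "M = nat (c-a-1)"
  define N where "N = nat (c-b-1)"
  define D where "D = nat (b-a)"
  have MND: "M = D + N" using assms by (simp add: M_def N_def D_def)
  have surj: "?g ` gcar ?B = gcar ?C"
  proof
    show "?g ` gcar ?B \<subseteq> gcar ?C" using gmor_g2[OF assms] by (auto simp: gmor_def)
    show "gcar ?C \<subseteq> ?g ` gcar ?B"
    proof
      fix w assume "w \<in> gcar ?C"
      then obtain P where w: "w = (P,0)" by (auto simp: iarc_simps)
      have "((Y ^ N * P, 0), (0, 0)) \<in> gcar ?B" by (auto simp: gsum_simps farc_simps iarc_simps N_def)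
      moreover have "?g ((Y ^ N * P, 0), (0, 0)) = w" using w by (simp add: N_def)
      ultimately show "w \<in> ?g ` gcar ?B" by force
    qed
  qed
  have ker: "\<forall>v\<in>gcar ?B. ?g v = gzero ?C \<longleftrightarrow> v \<in> ?f ` gcar ?A"
  proof
    fix v assume "v \<in> gcar ?B"
    then obtain p q r u where v: "v = ((p,q),(r,0))" "p = Y ^ N * u" by (auto simp: gsum_simps farc_simps iarc_simps N_def)
    show "?g v = gzero ?C \<longleftrightarrow> v \<in> ?f ` gcar ?A"
    proof
      assume "?g v = gzero ?C"
      then have "u = Y^D * r" using v by (auto simp: iarc_simps N_def D_def)
      then have pe: "p = Y^M * r" using v MND by (simp add: power_add mult_ac)
      then have "v = ?f (p,q)" using v by (simp add: M_def)
      moreover have "(p,q) \<in> gcar ?A" using pe by (simp add: farc_simps M_def)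
      ultimately show "v \<in> ?f ` gcar ?A" by blast
    next
      assume "v \<in> ?f ` gcar ?A"
      then obtain p' q' w where "v = ?f (p',q')" "p' = Y^M * w" by (auto simp: farc_simps M_def)
      then have "v = ((Y^N * (Y^D * w), q'), (w, 0))" using MND by (simp add: M_def power_add mult_ac)
      then show "?g v = gzero ?C" by (simp add: iarc_simps N_def D_def del: mult_pCons_left)
    qed
  qed
  have inj: "inj_on ?f (gcar ?A)" by (auto simp: inj_on_def)
  show "short_exact ?A ?B ?C ?f ?g"
    unfolding short_exact_def using gmor_f2[OF assms] gmor_g2[OF assms] surj ker inj by blast
  show "\<not> ses_split ?A ?B ?f"
  proof
    assume "ses_split ?A ?B ?f"
    then obtain r where r: "gmor ?B ?A r" "\<forall>v\<in>gcar ?A. r (?f v) = v" by (auto simp: ses_split_def)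
    let ?z = "((0::complex poly,0::complex poly),(0::complex poly,0::complex poly))"
    let ?t = "((0::complex poly,0::complex poly),(1::complex poly,0::complex poly))"
    let ?s = "((Y^N,0::complex poly),(0::complex poly,0::complex poly))"
    let ?s' = "((Y^M,0::complex poly),(0::complex poly,0::complex poly))"
    have inB: "?z \<in> gcar ?B" "?t \<in> gcar ?B" "?s \<in> gcar ?B"
      by (auto simp: gsum_simps farc_simps iarc_simps N_def)
    have "r (gadd ?B ?z ?z) = gadd ?A (r ?z) (r ?z)" using r(1) inB unfolding gmor_def by blast
    hence rz: "r ?z = (0,0)" by (cases "r ?z") (simp add: gsum_simps farc_simps iarc_simps)
    obtain p1 q1 where pq1: "r ?t = (p1, q1)" by fastforce
    have "r (gx ?B ?t) = gx ?A (r ?t)" using r(1) inB unfolding gmor_def by blast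
    hence "p1 = 0" using rz pq1 by (simp add: gsum_simps farc_simps iarc_simps)
    obtain p2 q2 where pq2: "r ?s = (p2, q2)" by fastforce
    have dv: "Y^M dvd p2" using r(1) inB(3) pq2 unfolding gmor_def by (force simp: farc_simps M_def)
    have "r ((gy ?B ^^ D) ?s) = (gy ?A ^^ D) (r ?s)"
      using gmor_pow[OF r(1) gy_sum2 inB(3)] by blast
    hence "r ((Y^D*Y^N, Y^D*0),(Y^D*0,Y^D*0)) = (Y^D*p2, Y^D*q2)" unfolding gy_sum1 farc_simps(6) gy_pow2 pq2 gy_pow .
    hence x2: "r ?s' = (Y^D*p2, Y^D*q2)" using MND by (simp add: power_add del: mult_pCons_left)
    have "Y^N dvd Y^M" using MND by (simp add: power_add)
    hence inB': "?s' \<in> gcar ?B" by (auto simp: gsum_simps farc_simps iarc_simps N_def)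
    have "r (gadd ?B ?s' ?t) = gadd ?A (r ?s') (r ?t)" using r(1) inB inB' unfolding gmor_def by blast
    also have "gadd ?B ?s' ?t = ?f (Y^M, 0)" by (simp add: gsum_simps farc_simps iarc_simps M_def)
    also have "r (?f (Y^M,0)) = (Y^M,0)" using r(2) farc_simps(1)[of a c]
      by (metis (mono_tags, lifting) M_def case_prod_conv mem_Collect_eq dvd_refl)
    finally have "Y^D * p2 = Y^M" using x2 pq1 \<open>p1 = 0\<close> by (simp add: farc_simps)
    hence "Y^D * p2 = Y^D * Y^N" using MND by (simp add: power_add)
    hence "p2 = Y^N" by simp
    hence "Y^M dvd monom 1 N" using dv by (simp add: monom_altdef)
    hence "M \<le> N" by (rule Y_dvd_monom[rotated]) simp
    thus False using MND assms by (simp add: D_def)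
  qed
qed

theorem lemma4p5:
  fixes a b c :: int
  assumes "a < b" and "b < c"
  shows "(\<exists>f g. short_exact (iarc b) (gsum (farc a b) (iarc c)) (farc a c) f g
              \<and> \<not> ses_split (iarc b) (gsum (farc a b) (iarc c)) f)
       \<and> (\<exists>f' g'. short_exact (farc a c) (gsum (farc b c) (iarc a)) (iarc b) f' g'
              \<and> \<not> ses_split (farc a c) (gsum (farc b c) (iarc a)) f')"
  using seq1[OF assms] seq2[OF assms] by blast

end
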